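(* Let $(\mathfrak g,\{e_1,\dots,e_n\})$ be a nice nilpotent Lie algebra with root matrix $M_\Delta\in\mathbb R^{m\times n}$ and vector of (nonzero) structure constants $c=(c_1,\dots,c_m)\in\mathbb R^m$ (ordered as the rows of $M_\Delta$), let $b$ be a solution of $M_\Delta M_\Delta^T b=[1]$, let $\lambda\in\mathbb R$ and $\delta\in(\mathbb Z_2)^n$. There exists a diagonal metric on $\mathfrak g$ of signature $\delta$ with $\operatorname{Ric}=\lambda\,\mathrm{id}+D$ for some derivation $D$ if and only if there is a vector $X=(x_1,\dots,x_m)\in\mathbb R^m$ such that: (K) $X\in -2\lambda b+\ker M_\Delta^{T}$; (H) $x_h\neq 0$ for every $h=1,\dots,m$; (L) $\operatorname{logsign}X=M_{\Delta,2}\,\delta$; (P) for some (equivalently, every) choice of integer vectors $\alpha_1,\dots,\alpha_k\in\mathbb Z^m$ forming a basis of $\ker M_\Delta^T$, one has $X^{\alpha_i}=c^{2\alpha_i}$ for $i=1,\dots,k$, where for $\alpha=(a_1,\dots,a_m)$ we write $X^{\alpha}=\prod_{h=1}^m x_h^{a_h}$ and $c^{2\alpha}=\prod_{h=1}^m c_h^{2a_h}$.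
   Context: A nice Lie algebra is a Lie algebra $\mathfrak g$ with a basis $\{e_1,\dots,e_n\}$ (dual basis $\{e^i\}$) such that each $[e_i,e_j]$ is a multiple of some $e_k$ and each $e_i\lrcorner\, de^j$ is a multiple of some $e^k$ ($d$ the Chevalley–Eilenberg differential). Write $[e_i,e_j]=c_{ij}^ke_k$, $i<j$. The root matrix $M_\Delta$ has one row for each triple $(\{i,j\},k)$ with $[e_i,e_j]$ a nonzero multiple of $e_k$, with $+1$ in position $k$, $-1$ in positions $i,j$, $0$ elsewhere; the structure constant vector $c$ has entry $c_{ij}^k$ in the position of that row. $M_{\Delta,2}$ is the mod 2 reduction of $M_\Delta$; $[1]$ is the all-ones vector. A diagonal metric is $g=\sum g_ie^i\otimes e^i$, $g_i\neq0$; its signature is $\delta\in(\mathbb Z_2)^n$ with $\delta_i=0$ if $g_i>0$ and $\delta_i=1$ if $g_i<0$. For $X\in\mathbb R^m$ with nonzero entries, $\operatorname{logsign}X\in(\mathbb Z_2)^m$ has $h$-th entry $0$ if $x_h>0$ and $1$ if $x_h<0$. $\operatorname{Ric}$ is the Ricci operator of the left-invariant pseudo-Riemannian metric. *)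

theory Defs
  imports Complex_Main
begin

(* A real Lie algebra g of dimension n with basis e_0,...,e_{n-1} (indices < n) is encoded
   by its structure constants C: [e_a,e_b] = sum_k C a b k e_k. *)

type_synonym sconst = "nat \<Rightarrow> nat \<Rightarrow> nat \<Rightarrow> real"
type_synonym row = "nat \<times> nat \<times> nat"

definition vsp :: "nat \<Rightarrow> (nat \<Rightarrow> real) set" where
  "vsp n = {x. \<forall>i\<ge>n. x i = 0}"

definition ev :: "nat \<Rightarrow> nat \<Rightarrow> real" where
  "ev a = (\<lambda>i. if i = a then 1 else 0)"

definition brk :: "sconst \<Rightarrow> nat \<Rightarrow> (nat \<Rightarrow> real) \<Rightarrow> (nat \<Rightarrow> real) \<Rightarrow> nat \<Rightarrow> real" where
  "brk C n x y = (\<lambda>k. \<Sum>a<n. \<Sum>b<n. x a * y b * C a b k)"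

definition lie_algebra :: "sconst \<Rightarrow> nat \<Rightarrow> bool" where
  "lie_algebra C n \<longleftrightarrow>
     (\<forall>a b k. (a \<ge> n \<or> b \<ge> n \<or> k \<ge> n) \<longrightarrow> C a b k = 0) \<and>
     (\<forall>a b k. C a b k = - C b a k) \<and>
     (\<forall>x\<in>vsp n. \<forall>y\<in>vsp n. \<forall>z\<in>vsp n.
        (\<lambda>i. brk C n x (brk C n y z) i + brk C n y (brk C n z x) i + brk C n z (brk C n x y) i) = (\<lambda>i. 0))"

definition nilpotent :: "sconst \<Rightarrow> nat \<Rightarrow> bool" where
  "nilpotent C n \<longleftrightarrow> (\<exists>N. \<forall>xs y. length xs = N \<longrightarrow> set xs \<subseteq> vsp n \<longrightarrow> y \<in> vsp n \<longrightarrow>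
      foldr (brk C n) xs y = (\<lambda>i. 0))"

(* Chevalley-Eilenberg differential on 1-forms: de^j(x,y) = - e^j([x,y]);
   the contraction e_a \<lrcorner> de^j is the 1-form  e_l \<mapsto> de^j(e_a,e_l) = - C a l j. *)
definition contr_de :: "sconst \<Rightarrow> nat \<Rightarrow> nat \<Rightarrow> nat \<Rightarrow> nat \<Rightarrow> real" where
  "contr_de C n a j = (\<lambda>l. - brk C n (ev a) (ev l) j)"

definition nice :: "sconst \<Rightarrow> nat \<Rightarrow> bool" where
  "nice C n \<longleftrightarrow>
     (\<forall>a<n. \<forall>b<n. \<exists>k<n. \<exists>t::real. \<forall>i<n. brk C n (ev a) (ev b) i = t * ev k i) \<and>
     (\<forall>a<n. \<forall>j<n. \<exists>k<n. \<exists>t::real. \<forall>l<n. contr_de C n a j l = t * ev k l)"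

definition rows :: "sconst \<Rightarrow> nat \<Rightarrow> row set" where
  "rows C n = {(i,j,k). i < j \<and> j < n \<and> k < n \<and> C i j k \<noteq> 0}"

definition cvec :: "sconst \<Rightarrow> row \<Rightarrow> real" where
  "cvec C r = (case r of (i,j,k) \<Rightarrow> C i j k)"

definition rootM :: "row \<Rightarrow> nat \<Rightarrow> int" where
  "rootM r l = (case r of (i,j,k) \<Rightarrow>
      (if l = k then 1 else 0) - (if l = i then 1 else 0) - (if l = j then 1 else 0))"

definition rootMT_app :: "sconst \<Rightarrow> nat \<Rightarrow> (row \<Rightarrow> real) \<Rightarrow> nat \<Rightarrow> real" where
  "rootMT_app C n y = (\<lambda>l. \<Sum>r\<in>rows C n. of_int (rootM r l) * y r)"

definition in_ker_MT :: "sconst \<Rightarrow> nat \<Rightarrow> (row \<Rightarrow> real) \<Rightarrow> bool" where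
  "in_ker_MT C n y \<longleftrightarrow> (\<forall>l<n. rootMT_app C n y l = 0)"

definition solves_MMT :: "sconst \<Rightarrow> nat \<Rightarrow> (row \<Rightarrow> real) \<Rightarrow> bool" where
  "solves_MMT C n b \<longleftrightarrow>
     (\<forall>r\<in>rows C n. (\<Sum>l<n. of_int (rootM r l) * rootMT_app C n b l) = 1)"

definition int_basis_ker_MT :: "sconst \<Rightarrow> nat \<Rightarrow> nat \<Rightarrow> (nat \<Rightarrow> row \<Rightarrow> int) \<Rightarrow> bool" where
  "int_basis_ker_MT C n k \<alpha> \<longleftrightarrow>
     (\<forall>i<k. in_ker_MT C n (\<lambda>r. of_int (\<alpha> i r))) \<and>
     (\<forall>t::nat \<Rightarrow> real. (\<forall>r\<in>rows C n. (\<Sum>i<k. t i * of_int (\<alpha> i r)) = 0) \<longrightarrow> (\<forall>i<k. t i = 0)) \<and>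
     (\<forall>y. in_ker_MT C n y \<longrightarrow>
        (\<exists>t::nat \<Rightarrow> real. \<forall>r\<in>rows C n. y r = (\<Sum>i<k. t i * of_int (\<alpha> i r))))"

definition logsign :: "(row \<Rightarrow> real) \<Rightarrow> row \<Rightarrow> int" where
  "logsign X r = (if X r > 0 then 0 else 1)"

definition diag_metric :: "nat \<Rightarrow> (nat \<Rightarrow> real) \<Rightarrow> bool" where
  "diag_metric n g \<longleftrightarrow> (\<forall>i<n. g i \<noteq> 0)"

definition gm :: "nat \<Rightarrow> (nat \<Rightarrow> real) \<Rightarrow> (nat \<Rightarrow> real) \<Rightarrow> (nat \<Rightarrow> real) \<Rightarrow> real" where
  "gm n g x y = (\<Sum>i<n. g i * x i * y i)"

definition has_signature :: "nat \<Rightarrow> (nat \<Rightarrow> real) \<Rightarrow> (nat \<Rightarrow> int) \<Rightarrow> bool" where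
  "has_signature n g \<delta> \<longleftrightarrow> (\<forall>i<n. \<delta> i = (if g i > 0 then 0 else 1))"

(* Levi-Civita connection on left-invariant fields (Koszul formula):
   g(nabla_x y, z) = 1/2 (g([x,y],z) - g([y,z],x) + g([z,x],y)), solved in the g-orthogonal basis *)
definition lc :: "sconst \<Rightarrow> nat \<Rightarrow> (nat \<Rightarrow> real) \<Rightarrow> (nat \<Rightarrow> real) \<Rightarrow> (nat \<Rightarrow> real) \<Rightarrow> nat \<Rightarrow> real" where
  "lc C n g x y = (\<lambda>c. if c < n then
      (gm n g (brk C n x y) (ev c) - gm n g (brk C n y (ev c)) x + gm n g (brk C n (ev c) x) y)
        / (2 * g c)
     else 0)"

definition curv :: "sconst \<Rightarrow> nat \<Rightarrow> (nat \<Rightarrow> real) \<Rightarrow> (nat \<Rightarrow> real) \<Rightarrow> (nat \<Rightarrow> real) \<Rightarrow> (nat \<Rightarrow> real) \<Rightarrow> nat \<Rightarrow> real" where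
  "curv C n g x y z = (\<lambda>i. lc C n g x (lc C n g y z) i - lc C n g y (lc C n g x z) i
                          - lc C n g (brk C n x y) z i)"

definition ric :: "sconst \<Rightarrow> nat \<Rightarrow> (nat \<Rightarrow> real) \<Rightarrow> (nat \<Rightarrow> real) \<Rightarrow> (nat \<Rightarrow> real) \<Rightarrow> real" where
  "ric C n g y z = (\<Sum>a<n. curv C n g (ev a) y z a)"

(* Ricci operator: g(Ric y, z) = ric(y,z) *)
definition Ric :: "sconst \<Rightarrow> nat \<Rightarrow> (nat \<Rightarrow> real) \<Rightarrow> (nat \<Rightarrow> real) \<Rightarrow> nat \<Rightarrow> real" where
  "Ric C n g y = (\<lambda>c. if c < n then ric C n g y (ev c) / g c else 0)"

definition derivation :: "sconst \<Rightarrow> nat \<Rightarrow> ((nat \<Rightarrow> real) \<Rightarrow> nat \<Rightarrow> real) \<Rightarrow> bool" where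
  "derivation C n D \<longleftrightarrow>
     (\<forall>x\<in>vsp n. D x \<in> vsp n) \<and>
     (\<forall>x\<in>vsp n. \<forall>y\<in>vsp n. \<forall>t::real. D (\<lambda>i. t * x i + y i) = (\<lambda>i. t * D x i + D y i)) \<and>
     (\<forall>x\<in>vsp n. \<forall>y\<in>vsp n. D (brk C n x y) = (\<lambda>i. brk C n (D x) y i + brk C n x (D y) i))"

end

theory Submission
  imports Defs
begin


definition Gam :: "sconst \<Rightarrow> (nat\<Rightarrow>real) \<Rightarrow> nat \<Rightarrow> nat \<Rightarrow> nat \<Rightarrow> real" where
 "Gam C g a b c = (g c * C a b c - g a * C b c a + g b * C c a b) / (2 * g c)"

lemma ev_mult1: "ev a i * (z::real) = (if i = a then z else 0)" by (simp add: ev_def)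
lemma ev_mult2: "(z::real) * ev a i = (if i = a then z else 0)" by (simp add: ev_def)

lemma if0_mult: "(if P then z else 0) * (w::real) = (if P then z * w else 0)" by simp

lemma sum_if_const: "(\<Sum>b\<in>A. if P then f b else (0::real)) = (if P then sum f A else 0)" by simp

lemma gm_ev: "c < n \<Longrightarrow> gm n g v (ev c) = g c * v c"
  by (simp add: gm_def ev_mult2)

lemma brk_ev2: "b < n \<Longrightarrow> brk C n x (ev b) k = (\<Sum>a<n. x a * C a b k)"
  by (simp add: brk_def ev_mult1 ev_mult2 if0_mult sum_if_const)

lemma brk_ev1: "a < n \<Longrightarrow> brk C n (ev a) y k = (\<Sum>b<n. y b * C a b k)"
  by (simp add: brk_def ev_mult1 ev_mult2 if0_mult sum_if_const)

lemma lc_eq: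
  assumes "c < n" "g c \<noteq> 0"
  shows "lc C n g x y c = (\<Sum>a<n. \<Sum>b<n. x a * y b * Gam C g a b c)"
proof -
  have 1: "gm n g (brk C n x y) (ev c) = (\<Sum>a<n. \<Sum>b<n. x a * y b * (g c * C a b c))"
    using assms by (simp add: gm_ev brk_def sum_distrib_left sum_distrib_right mult_ac)
  have 2: "gm n g (brk C n y (ev c)) x = (\<Sum>a<n. \<Sum>b<n. x a * y b * (g a * C b c a))"
    using assms by (simp add: gm_def brk_ev2 sum_distrib_left sum_distrib_right mult_ac)
  have 3: "gm n g (brk C n (ev c) x) y = (\<Sum>a<n. \<Sum>b<n. x a * y b * (g b * C c a b))"
    using assms apply (simp add: gm_def brk_ev1 sum_distrib_left sum_distrib_right mult_ac)
    apply (subst sum.swap) by simp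
  show ?thesis using assms
    unfolding lc_def 1 2 3 Gam_def
    by (simp add: sum_subtractf[symmetric] sum.distrib[symmetric] sum_divide_distrib algebra_simps add_divide_distrib diff_divide_distrib)
qed

lemma lc_ev1: "a < n \<Longrightarrow> c < n \<Longrightarrow> g c \<noteq> 0 \<Longrightarrow> lc C n g (ev a) w c = (\<Sum>b<n. w b * Gam C g a b c)"
  by (simp add: lc_eq ev_mult1 if0_mult sum_if_const mult.assoc)

lemma lc_ev2: "b < n \<Longrightarrow> c < n \<Longrightarrow> g c \<noteq> 0 \<Longrightarrow> lc C n g x (ev b) c = (\<Sum>a<n. x a * Gam C g a b c)"
  by (simp add: lc_eq ev_mult1 ev_mult2 if0_mult sum_if_const mult.assoc)

lemma lc_ev12: "a < n \<Longrightarrow> b < n \<Longrightarrow> c < n \<Longrightarrow> g c \<noteq> 0 \<Longrightarrow> lc C n g (ev a) (ev b) c = Gam C g a b c"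
  by (simp add: lc_ev1 ev_mult1 if0_mult sum_if_const)

definition ric0 :: "sconst \<Rightarrow> (nat\<Rightarrow>real) \<Rightarrow> nat \<Rightarrow> nat \<Rightarrow> nat \<Rightarrow> real" where
 "ric0 C g n p q = (\<Sum>a<n. \<Sum>c<n. (Gam C g p q c * Gam C g a c a - Gam C g a q c * Gam C g p c a - C a p c * Gam C g c q a))"

lemma ric_eq:
  assumes g: "\<forall>i<n. g i \<noteq> 0" and d: "d < n"
  shows "ric C n g y (ev d) = (\<Sum>p<n. y p * ric0 C g n p d)"
proof -
  have T1: "(\<Sum>a<n. lc C n g (ev a) (lc C n g y (ev d)) a) = (\<Sum>p<n. y p * (\<Sum>a<n. \<Sum>c<n. Gam C g p d c * Gam C g a c a))"
  proof -
    have "(\<Sum>a<n. lc C n g (ev a) (lc C n g y (ev d)) a) = (\<Sum>a<n. \<Sum>c<n. (\<Sum>p<n. y p * Gam C g p d c) * Gam C g a c a)"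
      using g d by (intro sum.cong refl) (simp add: lc_ev1 lc_ev2)
    also have "\<dots> = (\<Sum>a<n. \<Sum>c<n. \<Sum>p<n. y p * (Gam C g p d c * Gam C g a c a))"
      by (simp add: sum_distrib_left sum_distrib_right mult_ac)
    also have "\<dots> = (\<Sum>a<n. \<Sum>p<n. \<Sum>c<n. y p * (Gam C g p d c * Gam C g a c a))"
      by (rule sum.cong[OF refl], rule sum.swap)
    also have "\<dots> = (\<Sum>p<n. \<Sum>a<n. \<Sum>c<n. y p * (Gam C g p d c * Gam C g a c a))"
      by (rule sum.swap)
    also have "\<dots> = (\<Sum>p<n. y p * (\<Sum>a<n. \<Sum>c<n. Gam C g p d c * Gam C g a c a))"
      by (simp add: sum_distrib_left)
    finally show ?thesis .
  qed
  have T2: "(\<Sum>a<n. lc C n g y (lc C n g (ev a) (ev d)) a) = (\<Sum>p<n. y p * (\<Sum>a<n. \<Sum>c<n. Gam C g a d c * Gam C g p c a))"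
  proof -
    have "(\<Sum>a<n. lc C n g y (lc C n g (ev a) (ev d)) a) = (\<Sum>a<n. \<Sum>p<n. \<Sum>c<n. y p * (Gam C g a d c * Gam C g p c a))"
    proof (intro sum.cong refl)
      fix a assume a: "a \<in> {..<n}"
      have "lc C n g y (lc C n g (ev a) (ev d)) a = (\<Sum>p<n. \<Sum>c<n. y p * lc C n g (ev a) (ev d) c * Gam C g p c a)"
        using a g by (simp add: lc_eq)
      also have "\<dots> = (\<Sum>p<n. \<Sum>c<n. y p * (Gam C g a d c * Gam C g p c a))"
        using a g d by (intro sum.cong refl) (simp add: lc_ev12)
      finally show "lc C n g y (lc C n g (ev a) (ev d)) a = (\<Sum>p<n. \<Sum>c<n. y p * (Gam C g a d c * Gam C g p c a))" .
    qed
    also have "\<dots> = (\<Sum>p<n. \<Sum>a<n. \<Sum>c<n. y p * (Gam C g a d c * Gam C g p c a))"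
      by (rule sum.swap)
    also have "\<dots> = (\<Sum>p<n. y p * (\<Sum>a<n. \<Sum>c<n. Gam C g a d c * Gam C g p c a))"
      by (simp add: sum_distrib_left)
    finally show ?thesis .
  qed
  have T3: "(\<Sum>a<n. lc C n g (brk C n (ev a) y) (ev d) a) = (\<Sum>p<n. y p * (\<Sum>a<n. \<Sum>c<n. C a p c * Gam C g c d a))"
  proof -
    have "(\<Sum>a<n. lc C n g (brk C n (ev a) y) (ev d) a) = (\<Sum>a<n. \<Sum>c<n. \<Sum>p<n. y p * (C a p c * Gam C g c d a))"
      using g d by (intro sum.cong refl) (simp add: lc_ev2 brk_ev1 sum_distrib_left sum_distrib_right mult_ac)
    also have "\<dots> = (\<Sum>a<n. \<Sum>p<n. \<Sum>c<n. y p * (C a p c * Gam C g c d a))"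
      by (rule sum.cong[OF refl], rule sum.swap)
    also have "\<dots> = (\<Sum>p<n. \<Sum>a<n. \<Sum>c<n. y p * (C a p c * Gam C g c d a))"
      by (rule sum.swap)
    also have "\<dots> = (\<Sum>p<n. y p * (\<Sum>a<n. \<Sum>c<n. C a p c * Gam C g c d a))"
      by (simp add: sum_distrib_left)
    finally show ?thesis .
  qed
  have "ric C n g y (ev d) = (\<Sum>a<n. lc C n g (ev a) (lc C n g y (ev d)) a) - (\<Sum>a<n. lc C n g y (lc C n g (ev a) (ev d)) a)
     - (\<Sum>a<n. lc C n g (brk C n (ev a) y) (ev d) a)"
    unfolding ric_def curv_def by (simp add: sum_subtractf)
  also have "\<dots> = (\<Sum>p<n. y p * ric0 C g n p d)"
    unfolding T1 T2 T3 ric0_def sum_subtractf[symmetric]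
    by (intro sum.cong refl) (simp add: sum_subtractf right_diff_distrib)
  finally show ?thesis .
qed

lemma sum_antisym_part:
  "(\<Sum>a<n. \<Sum>c<n. h a c + (f c a - f a c)) = (\<Sum>a<(n::nat). \<Sum>c<n. (h a c :: real))"
proof -
  have "(\<Sum>a<n. \<Sum>c<n. f c a) = (\<Sum>a<n. \<Sum>c<n. f a c)" by (rule sum.swap)
  then show ?thesis by (simp add: sum.distrib sum_subtractf)
qed

lemma pw_abs:
  fixes gA gC gP gQ x1 x2 x3 x4 x5 x6 x7 :: real
  assumes "gA \<noteq> 0" "gC \<noteq> 0"
  shows "(gC*x1 - gA*x2 + gQ*(-x3))/(2*gC) * ((gA*x4 - gP*x5 + gC*x6)/(2*gA))
        + x6 * ((gA*(-x2) - gC*x7 + gQ*x3)/(2*gA))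
   = ((gC * gA * x1 * x4 - gA * gC * x2 * x6) / (4 * gA * gC) + x6 * (-x2) / 2)
     + ((gC ^ 2 * x1 * x6 - gA ^ 2 * x2 * x4 - gQ * gP * (-x3) * x5) / (4 * gA * gC) - gC / (2 * gA) * x6 * x7)
     + (gP / (4 * gC) * (-x2) * (-x5) - gP / (4 * gA) * x1 * x5)
     + (gQ / (4 * gA) * x3 * x6 - gQ / (4 * gC) * (-x3) * (-x4))"
  using assms by (simp add: field_simps) (simp add: algebra_simps power2_eq_square)
lemma sum_antisym_part2:
  "(\<Sum>a<n. \<Sum>c<n. h a c + (f c a - f a c) + (k a c - k c a)) = (\<Sum>a<(n::nat). \<Sum>c<n. (h a c :: real))"
proof -
  have "(\<Sum>a<n. \<Sum>c<n. f c a) = (\<Sum>a<n. \<Sum>c<n. f a c)" by (rule sum.swap)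
  moreover have "(\<Sum>a<n. \<Sum>c<n. k c a) = (\<Sum>a<n. \<Sum>c<n. k a c)" by (rule sum.swap)
  ultimately show ?thesis by (simp add: sum.distrib sum_subtractf)
qed

lemma dg_abs:
  fixes gA gC gP y1 y2 y3 :: real
  assumes "gA \<noteq> 0" "gC \<noteq> 0"
  shows "- ((gC ^ 2 * y1 * y1 - gA ^ 2 * y2 * y2 - gP * gP * (-y3) * (-y3)) / (4 * gA * gC) - gC / (2 * gA) * y1 * (-y1))
     = (y3^2 * gP^2 / (4 * gA * gC) - y1^2 * gC / (2 * gA)) + (gA / (4 * gC) * y2^2 - gC / (4 * gA) * (-y1)^2)"
  using assms by (simp add: field_simps) (simp add: algebra_simps power2_eq_square)

lemma ric0_formula:
  assumes AS: "\<forall>a b k. C a b k = - C b a k"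
    and g: "\<forall>i<n. g i \<noteq> 0"
    and Z1: "\<forall>a c. a<n \<longrightarrow> c<n \<longrightarrow> C c a a = 0"
    and Z2: "\<forall>a b c d. a<n \<longrightarrow> b<n \<longrightarrow> c<n \<longrightarrow> d<n \<longrightarrow> C a b c * C c d a = 0"
    and N1: "\<forall>i j k k'. i<n \<longrightarrow> j<n \<longrightarrow> k<n \<longrightarrow> k'<n \<longrightarrow> C i j k \<noteq> 0 \<longrightarrow> C i j k' \<noteq> 0 \<longrightarrow> k = k'"
    and N2: "\<forall>i l l' k. i<n \<longrightarrow> l<n \<longrightarrow> l'<n \<longrightarrow> k<n \<longrightarrow> C i l k \<noteq> 0 \<longrightarrow> C i l' k \<noteq> 0 \<longrightarrow> l = l'"
    and p: "p < n" and q: "q < n"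
  shows "ric0 C g n p q = (if p = q then (\<Sum>a<n. \<Sum>c<n. (C a c p)^2 * (g p)^2 / (4 * g a * g c) - (C a p c)^2 * g c / (2 * g a)) else 0)"
proof -
  define G where "G = Gam C g"
  define \<phi> where "\<phi> = (\<lambda>a c. g p / (4 * g a) * C a q c * C c a p)"
  define \<psi> where "\<psi> = (\<lambda>a c. g q / (4 * g a) * C a c q * C a p c)"
  define Zr where "Zr = (\<lambda>a c. (g c * g a * C a q c * C p c a - g a * g c * C q c a * C a p c) / (4 * g a * g c) + C a p c * C c q a / 2)"
  define Dg where "Dg = (\<lambda>a c. (g c ^ 2 * C a q c * C a p c - g a ^ 2 * C q c a * C p c a - g q * g p * C c a q * C c a p) / (4 * g a * g c)
        - g c / (2 * g a) * C a p c * C q a c)"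
  have G0: "G a c a = 0" if "a < n" "c < n" for a c
  proof -
    have "C a a c = 0" using AS[rule_format, of a a c] by simp
    moreover have "C c a a = 0" using Z1 that by blast
    moreover have "C a c a = 0" using AS[rule_format, of a c a] \<open>C c a a = 0\<close> by simp
    ultimately show ?thesis by (simp add: G_def Gam_def)
  qed
  have pw: "G a q c * G p c a + C a p c * G c q a = Zr a c + Dg a c + (\<phi> c a - \<phi> a c) + (\<psi> a c - \<psi> c a)"
    if "a < n" "c < n" for a c
  proof -
    have ga: "g a \<noteq> 0" and gc: "g c \<noteq> 0" using g that by auto
    have e1: "C c q a = - C q c a" "C a c p = - C c a p" "C c p a = - C p c a" "C c a q = - C a c q"
      using AS[rule_format, of c q a] AS[rule_format, of a c p] AS[rule_format, of c p a] AS[rule_format, of c a q] by simp_all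
    show ?thesis unfolding G_def Gam_def \<phi>_def \<psi>_def Zr_def Dg_def e1
      by (rule pw_abs[OF ga gc])
  qed
  have Zr0: "Zr a c = 0" if "a < n" "c < n" for a c
  proof -
    have "C a q c * C c p a = 0" "C a p c * C c q a = 0" using Z2 that p q by auto
    moreover have "C p c a = - C c p a" "C q c a = - C c q a" using AS by metis+
    ultimately show ?thesis unfolding Zr_def by auto
  qed
  have "ric0 C g n p q = - (\<Sum>a<n. \<Sum>c<n. G a q c * G p c a + C a p c * G c q a)"
    unfolding ric0_def G_def[symmetric] sum_negf[symmetric]
    by (intro sum.cong refl) (simp add: G0)
  also have "\<dots> = - (\<Sum>a<n. \<Sum>c<n. Zr a c + Dg a c + (\<phi> c a - \<phi> a c) + (\<psi> a c - \<psi> c a))"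
    using pw by (intro arg_cong[where f=uminus] sum.cong refl) simp
  also have "\<dots> = - (\<Sum>a<n. \<Sum>c<n. Dg a c)"
    unfolding sum_antisym_part2 using Zr0 by (intro arg_cong[where f=uminus] sum.cong refl) simp
  finally have R: "ric0 C g n p q = - (\<Sum>a<n. \<Sum>c<n. Dg a c)" .
  show ?thesis
  proof (cases "p = q")
    case False
    have "Dg a c = 0" if "a < n" "c < n" for a c
    proof -
      have "C a q c = 0 \<or> C a p c = 0" using N2 that p q False by blast
      moreover have "C q c a = 0 \<or> C p c a = 0"
      proof -
        have "C c q a = 0 \<or> C c p a = 0" using N2 that p q False by blast
        moreover have "C q c a = - C c q a" "C p c a = - C c p a" using AS by metis+
        ultimately show ?thesis by auto
      qed
      moreover have "C c a q = 0 \<or> C c a p = 0" using N1 that p q False by blast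
      moreover have "C a p c = 0 \<or> C q a c = 0"
      proof -
        have "C a p c = 0 \<or> C a q c = 0" using N2 that p q False by blast
        moreover have "C q a c = - C a q c" using AS by metis
        ultimately show ?thesis by auto
      qed
      ultimately show ?thesis unfolding Dg_def by auto
    qed
    then show ?thesis using R False by simp
  next
    case True
    define Y where "Y = (\<lambda>a c. g a / (4 * g c) * (C p c a)^2)"
    have "- Dg a c = ((C a c p)^2 * (g p)^2 / (4 * g a * g c) - (C a p c)^2 * g c / (2 * g a)) + (Y a c - Y c a)"
      if "a < n" "c < n" for a c
    proof -
      have ga: "g a \<noteq> 0" and gc: "g c \<noteq> 0" using g that by auto
      have e: "C p a c = - C a p c" "C c a p = - C a c p" using AS by metis+
      show ?thesis unfolding Dg_def Y_def True[symmetric] e by (rule dg_abs[OF ga gc])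
    qed
    then have "- (\<Sum>a<n. \<Sum>c<n. Dg a c) = (\<Sum>a<n. \<Sum>c<n. ((C a c p)^2 * (g p)^2 / (4 * g a * g c) - (C a p c)^2 * g c / (2 * g a)) + (Y a c - Y c a))"
      unfolding sum_negf[symmetric] by (intro sum.cong refl) simp
    also have "\<dots> = (\<Sum>a<n. \<Sum>c<n. (C a c p)^2 * (g p)^2 / (4 * g a * g c) - (C a p c)^2 * g c / (2 * g a))"
      by (rule sum_antisym_part[where f="\<lambda>a c. Y c a"])
    finally show ?thesis using R True by simp
  qed
qed

lemma brk_ev12: "a < n \<Longrightarrow> b < n \<Longrightarrow> brk C n (ev a) (ev b) k = C a b k"
  by (simp add: brk_ev1 ev_mult1 if0_mult)

lemma ev_vsp: "c < n \<Longrightarrow> ev c \<in> vsp n"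
  by (simp add: vsp_def ev_def)

lemma brk_scale2: "brk C n x (\<lambda>i. s * w i) = (\<lambda>i. s * brk C n x w i)"
  by (simp add: brk_def sum_distrib_left mult_ac)

lemma brk_zero2: "brk C n x (\<lambda>i. 0) = (\<lambda>i. 0)"
  by (simp add: brk_def)

lemma foldr_zero: "foldr (brk C n) xs (\<lambda>i. 0) = (\<lambda>i. 0)"
  by (induction xs) (simp_all add: brk_zero2)

lemma nil_cycle:
  assumes nil: "nilpotent C n" and x: "x \<in> vsp n" and y: "y \<in> vsp n" and w: "w \<in> vsp n"
    and F: "brk C n x (brk C n y w) = (\<lambda>i. t * w i)" and wne: "w j \<noteq> 0"
  shows "t = 0"
proof -
  obtain N where N: "\<forall>xs y. length xs = N \<longrightarrow> set xs \<subseteq> vsp n \<longrightarrow> y \<in> vsp n \<longrightarrow> foldr (brk C n) xs y = (\<lambda>i. 0)"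
    using nil unfolding nilpotent_def by blast
  define xs where "xs = concat (replicate N [x, y])"
  have pow: "foldr (brk C n) (concat (replicate M [x, y])) w = (\<lambda>i. t ^ M * w i)" for M
  proof (induction M)
    case (Suc M)
    have "foldr (brk C n) (concat (replicate (Suc M) [x, y])) w = brk C n x (brk C n y (\<lambda>i. t ^ M * w i))"
      using Suc by simp
    also have "\<dots> = (\<lambda>i. t ^ Suc M * w i)" by (simp only: brk_scale2 F) (simp add: mult_ac)
    finally show ?case .
  qed simp
  have len: "length xs = 2 * N" unfolding xs_def by (induction N) simp_all
  have sx: "set xs \<subseteq> vsp n" unfolding xs_def using x y by (induction N) auto
  have "xs = take N xs @ drop N xs" by simp
  then have "foldr (brk C n) xs w = foldr (brk C n) (take N xs) (foldr (brk C n) (drop N xs) w)"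
    by (metis foldr_append)
  also have "foldr (brk C n) (drop N xs) w = (\<lambda>i. 0)"
  proof -
    have "length (drop N xs) = N" using len by simp
    moreover have "set (drop N xs) \<subseteq> vsp n" using sx set_drop_subset by fastforce
    ultimately show ?thesis using N w by blast
  qed
  finally have "foldr (brk C n) xs w = (\<lambda>i. 0)" by (simp add: foldr_zero)
  then have "t ^ N * w j = 0" using pow[of N] unfolding xs_def by (metis)
  then show ?thesis using wne by simp
qed

lemma lie_AS: "lie_algebra C n \<Longrightarrow> C a b k = - C b a k"
  unfolding lie_algebra_def by blast

lemma lie_Z: "lie_algebra C n \<Longrightarrow> (a \<ge> n \<or> b \<ge> n \<or> k \<ge> n) \<Longrightarrow> C a b k = 0"
  unfolding lie_algebra_def by blast

lemma nice_N1:
  assumes "nice C n" "i<n" "j<n" "k<n" "k'<n" "C i j k \<noteq> 0" "C i j k' \<noteq> 0"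
  shows "k = k'"
proof -
  obtain kk t where kk: "\<forall>l<n. brk C n (ev i) (ev j) l = t * ev kk l"
    using assms(1,2,3) unfolding nice_def by blast
  have "C i j k = t * ev kk k" "C i j k' = t * ev kk k'" using kk assms by (simp_all add: brk_ev12)
  then show ?thesis using assms(6,7) by (auto simp: ev_def split: if_splits)
qed

lemma nice_N2:
  assumes "nice C n" "i<n" "l<n" "l'<n" "k<n" "C i l k \<noteq> 0" "C i l' k \<noteq> 0"
  shows "l = l'"
proof -
  obtain kk t where kk: "\<forall>m<n. contr_de C n i k m = t * ev kk m"
    using assms(1,2,5) unfolding nice_def by blast
  have "- C i l k = t * ev kk l" "- C i l' k = t * ev kk l'" using kk assms
    by (simp_all add: brk_ev12 contr_de_def)
  then show ?thesis using assms(6,7) by (auto simp: ev_def split: if_splits)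
qed

lemma single_brk:
  assumes "lie_algebra C n" "nice C n" "a<n" "b<n" "k<n" "C a b k \<noteq> 0"
  shows "brk C n (ev a) (ev b) = (\<lambda>i. C a b k * ev k i)"
proof
  fix i
  show "brk C n (ev a) (ev b) i = C a b k * ev k i"
  proof (cases "i < n")
    case True
    then show ?thesis using nice_N1[OF assms(2,3,4) True assms(5) _ assms(6)] assms
      by (cases "C a b i = 0") (simp_all add: brk_ev12, auto simp: ev_def)
  next
    case False
    then have "k \<noteq> i" using assms by auto
    then show ?thesis using assms lie_Z[OF assms(1), of a b i] False by (simp add: brk_ev12, simp add: ev_def)
  qed
qed

lemma nil_Z1:
  assumes "lie_algebra C n" "nice C n" "nilpotent C n" "a<n" "c<n"
  shows "C c a a = 0"
proof (rule ccontr)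
  assume ne: "C c a a \<noteq> 0"
  have "brk C n (ev c) (brk C n (ev c) (ev a)) = (\<lambda>i. (C c a a * C c a a) * ev a i)"
    by (simp only: single_brk[OF assms(1,2,5,4,4) ne] brk_scale2) (simp add: mult_ac)
  from nil_cycle[OF assms(3) ev_vsp ev_vsp ev_vsp this, of a] assms ne show False
    by (simp add: ev_def)
qed

lemma nil_Z2:
  assumes "lie_algebra C n" "nice C n" "nilpotent C n" "a<n" "b<n" "c<n" "d<n"
  shows "C a b c * C c d a = 0"
proof (rule ccontr)
  assume "C a b c * C c d a \<noteq> 0"
  then have ne1: "C b a c \<noteq> 0" and ne2: "C d c a \<noteq> 0"
    using lie_AS[OF assms(1), of a b c] lie_AS[OF assms(1), of c d a] by auto
  have "brk C n (ev d) (brk C n (ev b) (ev a)) = (\<lambda>i. (C b a c * C d c a) * ev a i)"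
    by (simp only: single_brk[OF assms(1,2,5,4,6) ne1] single_brk[OF assms(1,2,7,6,4) ne2] brk_scale2) (simp add: mult_ac)
  from nil_cycle[OF assms(3) ev_vsp ev_vsp ev_vsp this, of a] assms ne1 ne2 show False
    by (simp add: ev_def)
qed

lemma ric0_formula':
  assumes "lie_algebra C n" "nice C n" "nilpotent C n" "\<forall>i<n. g i \<noteq> 0" "p < n" "q < n"
  shows "ric0 C g n p q = (if p = q then (\<Sum>a<n. \<Sum>c<n. (C a c p)^2 * (g p)^2 / (4 * g a * g c) - (C a p c)^2 * g c / (2 * g a)) else 0)"
proof (rule ric0_formula)
  show "\<forall>a b k. C a b k = - C b a k" using lie_AS[OF assms(1)] by blast
  show "\<forall>a c. a < n \<longrightarrow> c < n \<longrightarrow> C c a a = 0" using nil_Z1[OF assms(1,2,3)] by blast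
  show "\<forall>a b c d. a < n \<longrightarrow> b < n \<longrightarrow> c < n \<longrightarrow> d < n \<longrightarrow> C a b c * C c d a = 0" using nil_Z2[OF assms(1,2,3)] by blast
  show "\<forall>i j k k'. i < n \<longrightarrow> j < n \<longrightarrow> k < n \<longrightarrow> k' < n \<longrightarrow> C i j k \<noteq> 0 \<longrightarrow> C i j k' \<noteq> 0 \<longrightarrow> k = k'"
    using nice_N1[OF assms(2)] by blast
  show "\<forall>i l l' k. i < n \<longrightarrow> l < n \<longrightarrow> l' < n \<longrightarrow> k < n \<longrightarrow> C i l k \<noteq> 0 \<longrightarrow> C i l' k \<noteq> 0 \<longrightarrow> l = l'"
    using nice_N2[OF assms(2)] by blast
qed (use assms in auto)

definition rho0 :: "sconst \<Rightarrow> (nat\<Rightarrow>real) \<Rightarrow> nat \<Rightarrow> nat \<Rightarrow> real" where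
  "rho0 C g n p = ric0 C g n p p / g p"

lemma Ric_diag:
  assumes "lie_algebra C n" "nice C n" "nilpotent C n" "\<forall>i<n. g i \<noteq> 0"
  shows "Ric C n g x = (\<lambda>c. if c < n then x c * rho0 C g n c else 0)"
proof
  fix c
  show "Ric C n g x c = (if c < n then x c * rho0 C g n c else 0)"
  proof (cases "c < n")
    case True
    have "ric C n g x (ev c) = (\<Sum>p<n. x p * ric0 C g n p c)" using ric_eq assms(4) True by blast
    also have "\<dots> = (\<Sum>p<n. if p = c then x p * ric0 C g n p c else 0)"
      using ric0_formula'[OF assms, of _ c] True by (intro sum.cong refl) auto
    also have "\<dots> = x c * ric0 C g n c c" using True by simp
    finally show ?thesis using True by (simp add: Ric_def rho0_def)
  qed (simp add: Ric_def)
qed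

lemma rows_sum:
  "(\<Sum>r\<in>rows C n. f r) = (\<Sum>i<n. \<Sum>j<n. \<Sum>k<n. if i < j \<and> C i j k \<noteq> 0 then f (i,j,k) else 0)"
proof -
  have R: "rows C n = {r \<in> {..<n} \<times> {..<n} \<times> {..<n}. (\<lambda>(i,j,k). i < j \<and> C i j k \<noteq> 0) r}"
    unfolding rows_def by auto
  have "(\<Sum>r\<in>rows C n. f r) = (\<Sum>r\<in>{..<n} \<times> {..<n} \<times> {..<n}. if (\<lambda>(i,j,k). i < j \<and> C i j k \<noteq> 0) r then f r else 0)"
    unfolding R by (rule sum.inter_filter) simp
  also have "\<dots> = (\<Sum>i<n. \<Sum>jk\<in>{..<n} \<times> {..<n}. if (\<lambda>(i,j,k). i < j \<and> C i j k \<noteq> 0) (i,jk) then f (i,jk) else 0)"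
    by (rule sum.cartesian_product')
  also have "\<dots> = (\<Sum>i<n. \<Sum>j<n. \<Sum>k<n. if i < j \<and> C i j k \<noteq> 0 then f (i,j,k) else 0)"
    by (intro sum.cong refl) (simp add: sum.cartesian_product')
  finally show ?thesis .
qed

definition xg :: "sconst \<Rightarrow> (nat\<Rightarrow>real) \<Rightarrow> row \<Rightarrow> real" where
  "xg C g r = (case r of (i,j,k) \<Rightarrow> (C i j k)^2 * g k / (g i * g j))"

lemma sym_sum:
  fixes u :: "nat \<Rightarrow> nat \<Rightarrow> real"
  assumes "\<And>a c. u a c = u c a" "\<And>a. u a a = 0"
  shows "(\<Sum>a<n. \<Sum>c<n. u a c) = 2 * (\<Sum>a<n. \<Sum>c<n. if a < c then u a c else 0)"
proof -
  have "(\<Sum>a<n. \<Sum>c<n. u a c) = (\<Sum>a<n. \<Sum>c<n. (if a < c then u a c else 0) + (if c < a then u c a else 0))"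
    using assms by (intro sum.cong refl) (auto simp: not_less_iff_gr_or_eq)
  also have "\<dots> = (\<Sum>a<n. \<Sum>c<n. if a < c then u a c else 0) + (\<Sum>a<n. \<Sum>c<n. if c < a then u c a else 0)"
    by (simp add: sum.distrib)
  also have "(\<Sum>a<n. \<Sum>c<n. if c < a then u c a else 0) = (\<Sum>a<n. \<Sum>c<n. if a < c then u a c else 0)"
    by (rule sum.swap)
  finally show ?thesis by simp
qed

lemma rho_rows:
  assumes "lie_algebra C n" "nice C n" "nilpotent C n" "\<forall>i<n. g i \<noteq> 0" "p < n"
  shows "rho0 C g n p = (\<Sum>r\<in>rows C n. of_int (rootM r p) * xg C g r) / 2"
proof -
  define h where "h = (\<lambda>i j k. (C i j k)^2 * g k / (g i * g j))"
  have AS: "\<And>a b k. C a b k = - C b a k" using lie_AS[OF assms(1)] by blast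
  have p: "p < n" by fact
  define Sk where "Sk = (\<Sum>i<n. \<Sum>j<n. if i < j then h i j p else 0)"
  define Si where "Si = (\<Sum>j<n. \<Sum>k<n. if p < j then h p j k else 0)"
  define Sj where "Sj = (\<Sum>i<n. \<Sum>k<n. if i < p then h i p k else 0)"
  have A: "(\<Sum>r\<in>rows C n. of_int (rootM r p) * xg C g r)
     = (\<Sum>i<n. \<Sum>j<n. \<Sum>k<n. (if i < j then (if p = k then h i j k else 0) else 0)
              - (if i < j then (if p = i then h i j k else 0) else 0) - (if i < j then (if p = j then h i j k else 0) else 0))"
    unfolding rows_sum by (intro sum.cong refl) (auto simp: rootM_def xg_def h_def)
  also have "\<dots> = Sk - Si - Sj"
  proof -
    have 1: "(\<Sum>i<n. \<Sum>j<n. \<Sum>k<n. (if i < j then (if p = k then h i j k else 0) else 0)) = Sk"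
      unfolding Sk_def using p by (intro sum.cong refl) simp
    have 2: "(\<Sum>i<n. \<Sum>j<n. \<Sum>k<n. (if i < j then (if p = i then h i j k else 0) else 0)) = Si"
    proof -
      have "(\<Sum>i<n. \<Sum>j<n. \<Sum>k<n. (if i < j then (if p = i then h i j k else 0) else 0))
          = (\<Sum>i<n. if p = i then (\<Sum>j<n. \<Sum>k<n. if p < j then h p j k else 0) else 0)"
        by (intro sum.cong refl) (auto intro!: sum.neutral sum.cong)
      also have "\<dots> = Si" unfolding Si_def using p by simp
      finally show ?thesis .
    qed
    have 3: "(\<Sum>i<n. \<Sum>j<n. \<Sum>k<n. (if i < j then (if p = j then h i j k else 0) else 0)) = Sj"
    proof -
      have "(\<Sum>i<n. \<Sum>j<n. \<Sum>k<n. (if i < j then (if p = j then h i j k else 0) else 0))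
          = (\<Sum>i<n. \<Sum>j<n. if p = j then (\<Sum>k<n. if i < p then h i p k else 0) else 0)"
        by (intro sum.cong refl) (auto intro!: sum.neutral sum.cong)
      also have "\<dots> = Sj" unfolding Sj_def using p by simp
      finally show ?thesis .
    qed
    show ?thesis by (simp add: sum_subtractf 1 2 3)
  qed
  finally have RS: "(\<Sum>r\<in>rows C n. of_int (rootM r p) * xg C g r) = Sk - Si - Sj" .
  have E: "(\<Sum>a<n. \<Sum>c<n. h a c p) = 2 * Sk"
  proof (unfold Sk_def, rule sym_sum)
    fix a c
    have "(C a c p)^2 = (C c a p)^2" using AS[of a c p] by simp
    then show "h a c p = h c a p" by (simp add: h_def mult_ac)
  next
    fix a
    have "C a a p = 0" using AS[of a a p] by simp
    then show "h a a p = 0" by (simp add: h_def)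
  qed
  have F: "(\<Sum>a<n. \<Sum>c<n. h a p c) = Si + Sj"
  proof -
    have "(\<Sum>a<n. \<Sum>c<n. h a p c) = (\<Sum>a<n. \<Sum>c<n. (if a < p then h a p c else 0) + (if p < a then h p a c else 0))"
    proof (intro sum.cong refl)
      fix a c
      have z: "C p p c = 0" using AS[of p p c] by simp
      have "(C p a c)^2 = (C a p c)^2" using AS[of p a c] by simp
      then have "h p a c = h a p c" by (simp add: h_def mult_ac)
      with z show "h a p c = (if a < p then h a p c else 0) + (if p < a then h p a c else 0)"
        by (auto simp: h_def)
    qed
    also have "\<dots> = Sj + Si" unfolding Si_def Sj_def
      by (simp add: sum.distrib)
    finally show ?thesis by simp
  qed
  have "rho0 C g n p = (\<Sum>a<n. \<Sum>c<n. h a c p / 4 - h a p c / 2)"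
  proof -
    have "rho0 C g n p = (\<Sum>a<n. \<Sum>c<n. (C a c p)^2 * (g p)^2 / (4 * g a * g c) - (C a p c)^2 * g c / (2 * g a)) / g p"
      by (simp add: rho0_def ric0_formula'[OF assms(1-4) p p])
    also have "\<dots> = (\<Sum>a<n. \<Sum>c<n. h a c p / 4 - h a p c / 2)"
      unfolding sum_divide_distrib
      using assms(4) p by (intro sum.cong refl) (simp add: h_def field_simps power2_eq_square)
    finally show ?thesis .
  qed
  also have "\<dots> = (\<Sum>a<n. \<Sum>c<n. h a c p) / 4 - (\<Sum>a<n. \<Sum>c<n. h a p c) / 2"
    by (simp add: sum_subtractf sum_divide_distrib)
  finally show ?thesis unfolding E F RS by (simp add: field_simps)
qed



lemma fredholm:
  fixes A :: "'l \<Rightarrow> 'r \<Rightarrow> real" and R :: "'r set"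
  assumes "finite R" "finite L"
    and "\<forall>y. (\<forall>l\<in>L. (\<Sum>r\<in>R. A l r * y r) = 0) \<longrightarrow> (\<Sum>r\<in>R. w r * y r) = 0"
  shows "\<exists>u. \<forall>r\<in>R. w r = (\<Sum>l\<in>L. A l r * u l)"
  using assms(2,3)
proof (induction L arbitrary: w rule: finite_induct)
  case empty
  then have "(\<Sum>r\<in>R. w r * w r) = 0" by simp
  then have "\<forall>r\<in>R. w r * w r = 0" using assms(1) by (subst (asm) sum_nonneg_eq_0_iff) auto
  then show ?case by simp
next
  case (insert l0 L)
  define a where "a = (\<lambda>y. \<Sum>r\<in>R. A l0 r * y r)"
  define KL where "KL = (\<lambda>y. \<forall>l\<in>L. (\<Sum>r\<in>R. A l r * y r) = 0)"
  show ?case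
  proof (cases "\<forall>y. KL y \<longrightarrow> a y = 0")
    case True
    have "\<forall>y. KL y \<longrightarrow> (\<Sum>r\<in>R. w r * y r) = 0"
      using insert.prems True unfolding KL_def a_def by auto
    then obtain u where u: "\<forall>r\<in>R. w r = (\<Sum>l\<in>L. A l r * u l)" using insert.IH unfolding KL_def by blast
    have "\<forall>r\<in>R. w r = (\<Sum>l\<in>insert l0 L. A l r * (u(l0 := 0)) l)"
    proof
      fix r assume "r \<in> R"
      have "(\<Sum>l\<in>L. A l r * (u(l0 := 0)) l) = (\<Sum>l\<in>L. A l r * u l)"
        using insert.hyps by (intro sum.cong refl) auto
      then show "w r = (\<Sum>l\<in>insert l0 L. A l r * (u(l0 := 0)) l)"
        using u \<open>r \<in> R\<close> insert.hyps by simp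
    qed
    then show ?thesis by blast
  next
    case False
    then obtain y0 where y0: "KL y0" "a y0 \<noteq> 0" by blast
    define s where "s = a y0"
    define t where "t = (\<Sum>r\<in>R. w r * y0 r) / s"
    define w' where "w' = (\<lambda>r. w r - t * A l0 r)"
    have "\<forall>y. KL y \<longrightarrow> (\<Sum>r\<in>R. w' r * y r) = 0"
    proof (intro allI impI)
      fix y assume y: "KL y"
      define z where "z = (\<lambda>r. y r - (a y / s) * y0 r)"
      have alin: "a (\<lambda>r. y r - c * y0 r) = a y - c * a y0" for c
        unfolding a_def by (simp add: algebra_simps sum_subtractf sum_distrib_left)
      have az: "a z = a y - (a y / s) * a y0"
        unfolding z_def by (rule alin)
      then have "a z = 0" using y0 by (simp add: s_def)
      have lin: "(\<Sum>r\<in>R. A l r * (y r - c * y0 r)) = (\<Sum>r\<in>R. A l r * y r) - c * (\<Sum>r\<in>R. A l r * y0 r)" for l c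
        by (simp add: right_diff_distrib sum_subtractf sum_distrib_left mult_ac)
      have "KL z" using y y0 unfolding KL_def z_def lin by simp
      then have "(\<Sum>r\<in>R. w r * z r) = 0"
        using insert.prems \<open>a z = 0\<close> unfolding KL_def a_def by auto
      then have "(\<Sum>r\<in>R. w r * y r) = (a y / s) * (\<Sum>r\<in>R. w r * y0 r)"
        unfolding z_def by (simp add: algebra_simps sum_subtractf sum_distrib_left)
      moreover have "(\<Sum>r\<in>R. w' r * y r) = (\<Sum>r\<in>R. w r * y r) - t * a y"
        unfolding w'_def a_def sum_distrib_left sum_subtractf[symmetric] by (intro sum.cong refl) (simp add: algebra_simps)
      ultimately show "(\<Sum>r\<in>R. w' r * y r) = 0" by (simp add: t_def)
    qed
    then obtain u where u: "\<forall>r\<in>R. w' r = (\<Sum>l\<in>L. A l r * u l)" using insert.IH unfolding KL_def by blast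
    have "\<forall>r\<in>R. w r = (\<Sum>l\<in>insert l0 L. A l r * (u(l0 := t)) l)"
    proof
      fix r assume "r \<in> R"
      have "(\<Sum>l\<in>L. A l r * (u(l0 := t)) l) = (\<Sum>l\<in>L. A l r * u l)"
        using insert.hyps by (intro sum.cong refl) auto
      then show "w r = (\<Sum>l\<in>insert l0 L. A l r * (u(l0 := t)) l)"
        using u \<open>r \<in> R\<close> insert.hyps unfolding w'_def by (simp add: algebra_simps)
    qed
    then show ?thesis by blast
  qed
qed

definition ibasis :: "('l \<Rightarrow> 'r \<Rightarrow> int) \<Rightarrow> 'r set \<Rightarrow> 'l set \<Rightarrow> 'r set \<Rightarrow> ('r \<Rightarrow> 'r \<Rightarrow> int) \<Rightarrow> bool" where
  "ibasis A R L I \<beta> \<longleftrightarrow> I \<subseteq> R \<and>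
     (\<forall>i\<in>I. \<forall>l\<in>L. (\<Sum>r\<in>R. of_int (A l r) * of_int (\<beta> i r)) = (0::real)) \<and>
     (\<forall>t::'r\<Rightarrow>real. (\<forall>r\<in>R. (\<Sum>i\<in>I. t i * of_int (\<beta> i r)) = 0) \<longrightarrow> (\<forall>i\<in>I. t i = 0)) \<and>
     (\<forall>y. (\<forall>l\<in>L. (\<Sum>r\<in>R. of_int (A l r) * y r) = 0) \<longrightarrow> (\<exists>t::'r\<Rightarrow>real. \<forall>r\<in>R. y r = (\<Sum>i\<in>I. t i * of_int (\<beta> i r))))"

lemma ibasis_exists:
  fixes A :: "'l \<Rightarrow> 'r \<Rightarrow> int"
  assumes "finite R" "finite L"
  shows "\<exists>I \<beta>. ibasis A R L I \<beta>"
  using assms(2)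
proof (induction L rule: finite_induct)
  case empty
  define \<beta> :: "'r \<Rightarrow> 'r \<Rightarrow> int" where "\<beta> = (\<lambda>i r. if r = i then (1::int) else 0)"
  have "ibasis A R {} R \<beta>"
    unfolding ibasis_def
  proof (intro conjI allI impI ballI)
    fix t :: "'r \<Rightarrow> real" and i assume H: "\<forall>r\<in>R. (\<Sum>i\<in>R. t i * of_int (\<beta> i r)) = 0" "i \<in> R"
    then show "t i = 0" using assms(1) by (auto simp: \<beta>_def if_distrib cong: if_cong)
  next
    fix y :: "'r \<Rightarrow> real"
    show "\<exists>t. \<forall>r\<in>R. y r = (\<Sum>i\<in>R. t i * of_int (\<beta> i r))"
      by (rule exI[of _ y]) (use assms(1) in \<open>auto simp: \<beta>_def if_distrib cong: if_cong\<close>)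
  qed auto
  then show ?case by blast
next
  case (insert l0 L)
  obtain I \<beta> where IB: "ibasis A R L I \<beta>" using insert.IH by blast
  have IR: "I \<subseteq> R" and fI: "finite I" using IB assms(1) unfolding ibasis_def by (auto intro: finite_subset)
  define a where "a = (\<lambda>i. \<Sum>r\<in>R. A l0 r * \<beta> i r)"
  show ?case
  proof (cases "\<forall>i\<in>I. a i = 0")
    case True
    have "ibasis A R (insert l0 L) I \<beta>"
      using IB True unfolding ibasis_def a_def
      by (auto simp flip: of_int_mult of_int_sum)
    then show ?thesis by blast
  next
    case False
    then obtain i0 where i0: "i0 \<in> I" "a i0 \<noteq> 0" by blast
    define s where "s = a i0"
    define I' where "I' = I - {i0}"
    define \<beta>' where "\<beta>' = (\<lambda>i r. s * \<beta> i r - a i * \<beta> i0 r)"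
    have sne: "real_of_int s \<noteq> 0" using i0 by (simp add: s_def)
    have i0I: "i0 \<notin> I'" "I = insert i0 I'" "finite I'" using i0 fI by (auto simp: I'_def)
    have aR: "real_of_int (a i) = (\<Sum>r\<in>R. of_int (A l0 r) * of_int (\<beta> i r))" for i
      by (simp add: a_def)
    have blin: "(\<Sum>r\<in>R. of_int (A l r) * real_of_int (\<beta>' i r))
        = of_int s * (\<Sum>r\<in>R. of_int (A l r) * of_int (\<beta> i r)) - of_int (a i) * (\<Sum>r\<in>R. of_int (A l r) * of_int (\<beta> i0 r))" for l i
      unfolding \<beta>'_def sum_distrib_left sum_subtractf[symmetric] by (intro sum.cong refl) (simp add: algebra_simps)
    have bsum: "(\<Sum>i\<in>I'. t i * real_of_int (\<beta>' i r))
        = (\<Sum>i\<in>I'. (of_int s * t i) * of_int (\<beta> i r)) - (\<Sum>i\<in>I'. t i * of_int (a i)) * of_int (\<beta> i0 r)" for t r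
      unfolding \<beta>'_def sum_distrib_right sum_subtractf[symmetric] by (intro sum.cong refl) (simp add: algebra_simps)
    have "ibasis A R (insert l0 L) I' \<beta>'"
      unfolding ibasis_def
    proof (intro conjI allI impI ballI)
      show "I' \<subseteq> R" using IR by (auto simp: I'_def)
    next
      fix i l assume i: "i \<in> I'" and l: "l \<in> insert l0 L"
      have iI: "i \<in> I" using i by (auto simp: I'_def)
      show "(\<Sum>r\<in>R. of_int (A l r) * real_of_int (\<beta>' i r)) = 0"
      proof (cases "l = l0")
        case True
        then show ?thesis unfolding True blin aR[symmetric] by (simp add: s_def)
      next
        case False
        then have "l \<in> L" using l by simp
        then show ?thesis unfolding blin using IB iI i0 unfolding ibasis_def by simp
      qed
    next
      fix t :: "'r \<Rightarrow> real" and i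
      assume H: "\<forall>r\<in>R. (\<Sum>i\<in>I'. t i * real_of_int (\<beta>' i r)) = 0" and i: "i \<in> I'"
      define t'' where "t'' = (\<lambda>j. if j = i0 then - (\<Sum>j\<in>I'. t j * of_int (a j)) else of_int s * t j)"
      have "\<forall>r\<in>R. (\<Sum>j\<in>I. t'' j * of_int (\<beta> j r)) = 0"
      proof
        fix r assume r: "r \<in> R"
        have "(\<Sum>j\<in>I. t'' j * of_int (\<beta> j r)) = t'' i0 * of_int (\<beta> i0 r) + (\<Sum>j\<in>I'. t'' j * of_int (\<beta> j r))"
          using i0I by simp
        also have "(\<Sum>j\<in>I'. t'' j * of_int (\<beta> j r)) = (\<Sum>j\<in>I'. (of_int s * t j) * of_int (\<beta> j r))"
          using i0I by (intro sum.cong refl) (auto simp: t''_def)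
        finally show "(\<Sum>j\<in>I. t'' j * of_int (\<beta> j r)) = 0"
          using H r unfolding bsum by (simp add: t''_def algebra_simps)
      qed
      then have "t'' i = 0" using IB i unfolding ibasis_def I'_def by blast
      moreover have "i \<noteq> i0" using i i0I by auto
      ultimately show "t i = 0" using sne by (simp add: t''_def)
    next
      fix y :: "'r \<Rightarrow> real"
      assume H: "\<forall>l\<in>insert l0 L. (\<Sum>r\<in>R. of_int (A l r) * y r) = 0"
      have "\<forall>l\<in>L. (\<Sum>r\<in>R. of_int (A l r) * y r) = 0" using H by simp
      then obtain t where t: "\<forall>r\<in>R. y r = (\<Sum>i\<in>I. t i * of_int (\<beta> i r))"
        using IB unfolding ibasis_def by blast
      have "(\<Sum>r\<in>R. of_int (A l0 r) * y r) = 0" using H by simp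
      also have "(\<Sum>r\<in>R. of_int (A l0 r) * y r) = (\<Sum>r\<in>R. \<Sum>i\<in>I. of_int (A l0 r) * (t i * of_int (\<beta> i r)))"
        using t by (simp add: sum_distrib_left)
      also have "\<dots> = (\<Sum>i\<in>I. t i * of_int (a i))"
        unfolding aR sum_distrib_left by (subst sum.swap) (simp add: mult_ac)
      finally have ta: "(\<Sum>i\<in>I. t i * of_int (a i)) = 0" by simp
      then have ta': "(\<Sum>i\<in>I'. t i * of_int (a i)) = - t i0 * of_int s"
        using i0I by (simp add: s_def)
      show "\<exists>t'. \<forall>r\<in>R. y r = (\<Sum>i\<in>I'. t' i * real_of_int (\<beta>' i r))"
      proof (intro exI ballI)
        fix r assume r: "r \<in> R"
        have "(\<Sum>i\<in>I'. (t i / of_int s) * real_of_int (\<beta>' i r))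
            = (\<Sum>i\<in>I'. t i * of_int (\<beta> i r)) - (\<Sum>i\<in>I'. t i * of_int (a i)) / of_int s * of_int (\<beta> i0 r)"
          unfolding bsum using sne by (simp add: sum_divide_distrib)
        also have "\<dots> = (\<Sum>i\<in>I. t i * of_int (\<beta> i r))"
          unfolding ta' using i0I sne by simp
        finally show "y r = (\<Sum>i\<in>I'. (t i / of_int s) * real_of_int (\<beta>' i r))" using t r by simp
      qed
    qed
    then show ?thesis by blast
  qed
qed



lemma finite_rows: "finite (rows C n)"
proof -
  have "rows C n \<subseteq> {..<n} \<times> {..<n} \<times> {..<n}" unfolding rows_def by auto
  then show ?thesis by (rule finite_subset) simp
qed

lemma exists_int_basis: "\<exists>k \<alpha>. int_basis_ker_MT C n k \<alpha>"
proof -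
  obtain I \<beta> where IB: "ibasis (\<lambda>l r. rootM r l) (rows C n) {..<n} I \<beta>"
    using ibasis_exists[OF finite_rows, of "{..<n}" "\<lambda>l r. rootM r l"] by blast
  have fI: "finite I" using IB finite_rows unfolding ibasis_def by (auto intro: finite_subset)
  obtain h where h: "bij_betw h {0..<card I} I" using ex_bij_betw_nat_finite[OF fI] by blast
  define k where "k = card I"
  define \<alpha> where "\<alpha> = (\<lambda>j. \<beta> (h j))"
  have reidx: "(\<Sum>j<k. f (h j)) = (\<Sum>i\<in>I. f i)" for f :: "_ \<Rightarrow> real"
    using sum.reindex_bij_betw[OF h, of f] unfolding k_def by (simp add: lessThan_atLeast0)
  have hI: "h j \<in> I" if "j < k" for j using h that unfolding k_def bij_betw_def by auto
  have inv: "inv_into {0..<k} h (h j) = j" if "j < k" for j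
    using h that unfolding k_def bij_betw_def by (simp add: inv_into_f_f)
  have "int_basis_ker_MT C n k \<alpha>"
    unfolding int_basis_ker_MT_def
  proof (intro conjI allI impI)
    fix i assume "i < k"
    then show "in_ker_MT C n (\<lambda>r. real_of_int (\<alpha> i r))"
      using IB hI unfolding ibasis_def in_ker_MT_def rootMT_app_def \<alpha>_def by auto
  next
    fix t :: "nat \<Rightarrow> real" and i
    assume H: "\<forall>r\<in>rows C n. (\<Sum>i<k. t i * real_of_int (\<alpha> i r)) = 0" and i: "i < k"
    define t' where "t' = (\<lambda>x. t (inv_into {0..<k} h x))"
    have "\<forall>r\<in>rows C n. (\<Sum>x\<in>I. t' x * real_of_int (\<beta> x r)) = 0"
    proof
      fix r assume r: "r \<in> rows C n"
      have "(\<Sum>x\<in>I. t' x * real_of_int (\<beta> x r)) = (\<Sum>j<k. t' (h j) * real_of_int (\<beta> (h j) r))"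
        by (rule reidx[symmetric])
      also have "\<dots> = (\<Sum>j<k. t j * real_of_int (\<alpha> j r))"
        by (intro sum.cong refl) (simp add: t'_def inv \<alpha>_def)
      finally show "(\<Sum>x\<in>I. t' x * real_of_int (\<beta> x r)) = 0" using H r by simp
    qed
    then have "t' (h i) = 0" using IB hI[OF i] unfolding ibasis_def by blast
    then show "t i = 0" using inv[OF i] by (simp add: t'_def)
  next
    fix y assume "in_ker_MT C n y"
    then have "\<forall>l\<in>{..<n}. (\<Sum>r\<in>rows C n. real_of_int (rootM r l) * y r) = 0"
      unfolding in_ker_MT_def rootMT_app_def by simp
    then obtain t where t: "\<forall>r\<in>rows C n. y r = (\<Sum>i\<in>I. t i * real_of_int (\<beta> i r))"
      using IB unfolding ibasis_def by blast
    show "\<exists>t. \<forall>r\<in>rows C n. y r = (\<Sum>i<k. t i * real_of_int (\<alpha> i r))"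
    proof (rule exI[of _ "\<lambda>j. t (h j)"], intro ballI)
      fix r assume "r \<in> rows C n"
      then show "y r = (\<Sum>i<k. t (h i) * real_of_int (\<alpha> i r))"
        using t reidx[of "\<lambda>i. t i * real_of_int (\<beta> i r)"] by (simp add: \<alpha>_def)
    qed
  qed
  then show ?thesis by blast
qed

lemma rootM_sum:
  fixes f :: "nat \<Rightarrow> real"
  assumes "i < n" "j < n" "k < n"
  shows "(\<Sum>l<n. of_int (rootM (i,j,k) l) * f l) = f k - f i - f j"
proof -
  have "(\<Sum>l<n. of_int (rootM (i,j,k) l) * f l) = (\<Sum>l<n. (if l = k then f l else 0) - (if l = i then f l else 0) - (if l = j then f l else 0))"
    by (intro sum.cong refl) (simp add: rootM_def)
  also have "\<dots> = f k - f i - f j" using assms by (simp add: sum_subtractf)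
  finally show ?thesis .
qed

lemma rootM_sum_int:
  fixes f :: "nat \<Rightarrow> int"
  assumes "i < n" "j < n" "k < n"
  shows "(\<Sum>l<n. rootM (i,j,k) l * f l) = f k - f i - f j"
proof -
  have "(\<Sum>l<n. rootM (i,j,k) l * f l) = (\<Sum>l<n. (if l = k then f l else 0) - (if l = i then f l else 0) - (if l = j then f l else 0))"
    by (intro sum.cong refl) (simp add: rootM_def)
  also have "\<dots> = f k - f i - f j" using assms by (simp add: sum_subtractf)
  finally show ?thesis .
qed

lemma rowsD: "(i,j,k) \<in> rows C n \<Longrightarrow> i < j \<and> i < n \<and> j < n \<and> k < n \<and> C i j k \<noteq> 0"
  unfolding rows_def by auto

lemma rootMT_lin: "rootMT_app C n (\<lambda>r. X r + c * Y r) l = rootMT_app C n X l + c * rootMT_app C n Y l"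
  unfolding rootMT_app_def by (simp add: algebra_simps sum.distrib sum_distrib_left)

lemma K_from_rel:
  assumes b: "solves_MMT C n b"
    and rel: "\<forall>r\<in>rows C n. (\<Sum>l<n. of_int (rootM r l) * rootMT_app C n X l) = -2 * lam"
  shows "\<exists>y. in_ker_MT C n y \<and> (\<forall>r\<in>rows C n. X r = -2 * lam * b r + y r)"
proof -
  define y where "y = (\<lambda>r. X r + (2 * lam) * b r)"
  have My: "(\<Sum>l<n. of_int (rootM r l) * rootMT_app C n y l) = 0" if "r \<in> rows C n" for r
  proof -
    have "(\<Sum>l<n. of_int (rootM r l) * rootMT_app C n y l)
       = (\<Sum>l<n. of_int (rootM r l) * rootMT_app C n X l) + 2 * lam * (\<Sum>l<n. of_int (rootM r l) * rootMT_app C n b l)"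
      unfolding y_def rootMT_lin by (simp add: algebra_simps sum.distrib sum_distrib_left)
    then show ?thesis using rel b that unfolding solves_MMT_def by simp
  qed
  have "(\<Sum>l<n. (rootMT_app C n y l)^2) = (\<Sum>l<n. rootMT_app C n y l * (\<Sum>r\<in>rows C n. of_int (rootM r l) * y r))"
    by (simp add: power2_eq_square rootMT_app_def)
  also have "\<dots> = (\<Sum>r\<in>rows C n. y r * (\<Sum>l<n. of_int (rootM r l) * rootMT_app C n y l))"
    by (simp add: sum_distrib_left sum_distrib_right mult_ac) (rule sum.swap)
  also have "\<dots> = 0" using My by simp
  finally have "(\<Sum>l<n. (rootMT_app C n y l)^2) = 0" .
  then have "\<forall>l\<in>{..<n}. (rootMT_app C n y l)^2 = 0"
    by (subst (asm) sum_nonneg_eq_0_iff) auto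
  then have "in_ker_MT C n y" unfolding in_ker_MT_def by simp
  moreover have "\<forall>r\<in>rows C n. X r = -2 * lam * b r + y r" by (simp add: y_def)
  ultimately show ?thesis by blast
qed

lemma brk_vsp: "lie_algebra C n \<Longrightarrow> brk C n x y \<in> vsp n"
  unfolding vsp_def brk_def by (auto simp: lie_Z)

lemma rel_fwd:
  assumes lie: "lie_algebra C n" and nice: "nice C n" and nil: "nilpotent C n"
    and g: "diag_metric n g" and D: "derivation C n D"
    and Ric: "\<forall>x\<in>vsp n. Ric C n g x = (\<lambda>i. lam * x i + D x i)"
    and r: "(i,j,k) \<in> rows C n"
  shows "rho0 C g n k - rho0 C g n i - rho0 C g n j = - lam"
proof -
  have g': "\<forall>i<n. g i \<noteq> 0" using g unfolding diag_metric_def by blast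
  have ijk: "i < n" "j < n" "k < n" "C i j k \<noteq> 0" using rowsD[OF r] by auto
  define rho where "rho = rho0 C g n"
  have Dx: "D x = (\<lambda>c. (if c < n then x c * rho c else 0) - lam * x c)" if "x \<in> vsp n" for x
  proof
    fix c
    have "Ric C n g x c = lam * x c + D x c" using Ric that by metis
    then show "D x c = (if c < n then x c * rho c else 0) - lam * x c"
      using Ric_diag[OF lie nice nil g', of x] by (auto simp: rho_def algebra_simps)
  qed
  have Dev: "D (ev a) c = ev a c * (rho c - lam)" if "a < n" "c < n" for a c
    using Dx[OF ev_vsp[OF that(1)]] that by (simp add: algebra_simps)
  have der: "D (brk C n (ev i) (ev j)) = (\<lambda>c. brk C n (D (ev i)) (ev j) c + brk C n (ev i) (D (ev j)) c)"
    using D ev_vsp ijk unfolding derivation_def by blast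
  have "D (brk C n (ev i) (ev j)) k = C i j k * rho k - lam * C i j k"
    using Dx[OF brk_vsp[OF lie]] ijk by (simp add: brk_ev12)
  moreover have "brk C n (D (ev i)) (ev j) k = (rho i - lam) * C i j k"
  proof -
    have "brk C n (D (ev i)) (ev j) k = (\<Sum>a<n. D (ev i) a * C a j k)" using ijk by (simp add: brk_ev2)
    also have "\<dots> = (\<Sum>a<n. if a = i then (rho i - lam) * C i j k else 0)"
      using ijk by (intro sum.cong refl) (simp add: Dev, simp add: ev_def)
    finally show ?thesis using ijk by simp
  qed
  moreover have "brk C n (ev i) (D (ev j)) k = (rho j - lam) * C i j k"
  proof -
    have "brk C n (ev i) (D (ev j)) k = (\<Sum>b<n. D (ev j) b * C i b k)" using ijk by (simp add: brk_ev1)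
    also have "\<dots> = (\<Sum>b<n. if b = j then (rho j - lam) * C i j k else 0)"
      using ijk by (intro sum.cong refl) (simp add: Dev, simp add: ev_def)
    finally show ?thesis using ijk by simp
  qed
  ultimately have "C i j k * (rho k - rho i - rho j + lam) = 0"
    using der by (simp add: fun_eq_iff algebra_simps)
  then show ?thesis using ijk by (simp add: rho_def)
qed

lemma sign_fwd:
  assumes g: "diag_metric n g" and sig: "has_signature n g \<delta>" and r: "r \<in> rows C n"
  shows "logsign (xg C g) r = (\<Sum>l<n. rootM r l * \<delta> l) mod 2"
proof -
  obtain i j k where rr: "r = (i,j,k)" by (cases r) auto
  have ijk: "i < n" "j < n" "k < n" "C i j k \<noteq> 0" using rowsD r rr by auto
  have gi: "g i \<noteq> 0" "g j \<noteq> 0" "g k \<noteq> 0" using g ijk unfolding diag_metric_def by auto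
  have d: "\<delta> i = (if g i > 0 then 0 else 1)" "\<delta> j = (if g j > 0 then 0 else 1)" "\<delta> k = (if g k > 0 then 0 else 1)"
    using sig ijk unfolding has_signature_def by auto
  have C2: "(C i j k)^2 > 0" using ijk by simp
  have "(\<Sum>l<n. rootM r l * \<delta> l) = \<delta> k - \<delta> i - \<delta> j" unfolding rr using rootM_sum_int ijk by blast
  moreover have "xg C g r = (C i j k)^2 * (g k / (g i * g j))" by (simp add: rr xg_def)
  ultimately show ?thesis using C2 gi unfolding logsign_def d
    by (cases "g i > 0"; cases "g j > 0"; cases "g k > 0")
       (auto simp: zero_less_mult_iff zero_less_divide_iff linorder_not_less order_le_less)
qed

lemma prod_powi_sum:
  assumes "(x::real) \<noteq> 0" "finite S"
  shows "(\<Prod>r\<in>S. x powi f r) = x powi (\<Sum>r\<in>S. f r)"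
  using assms(2) by (induction S rule: finite_induct) (simp_all add: power_int_add assms(1))

lemma row_factor:
  assumes g: "\<forall>l<n. g l \<noteq> 0" and r: "r \<in> rows C n"
  shows "xg C g r powi a = cvec C r powi (2 * a) * (\<Prod>l<n. g l powi (rootM r l * a))"
proof -
  obtain i j k where rr: "r = (i,j,k)" by (cases r) auto
  have ijk: "i < n" "j < n" "k < n" "C i j k \<noteq> 0" using rowsD r rr by auto
  have gi: "g i \<noteq> 0" "g j \<noteq> 0" "g k \<noteq> 0" using g ijk by auto
  have "(\<Prod>l<n. g l powi (rootM r l * a))
     = (\<Prod>l<n. (if l = k then g l powi a else 1) * (if l = i then g l powi (-a) else 1) * (if l = j then g l powi (-a) else 1))"
  proof (intro prod.cong refl)
    fix l assume "l \<in> {..<n}"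
    then have gl: "g l \<noteq> 0" using g by auto
    have "rootM r l * a = (if l = k then a else 0) + (if l = i then -a else 0) + (if l = j then -a else 0)"
      by (simp add: rr rootM_def algebra_simps)
    then show "g l powi (rootM r l * a) = (if l = k then g l powi a else 1) * (if l = i then g l powi (-a) else 1) * (if l = j then g l powi (-a) else 1)"
      using gl by (simp add: power_int_add)
  qed
  also have "\<dots> = g k powi a * g i powi (-a) * g j powi (-a)"
    using ijk by (simp add: prod.distrib)
  finally have P: "(\<Prod>l<n. g l powi (rootM r l * a)) = g k powi a * g i powi (-a) * g j powi (-a)" .
  have "xg C g r powi a = ((C i j k)^2 * g k * inverse (g i) * inverse (g j)) powi a"
    by (simp add: rr xg_def divide_inverse mult_ac)
  also have "\<dots> = ((C i j k) powi 2) powi a * g k powi a * g i powi (-a) * g j powi (-a)"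
    by (simp add: power_int_mult_distrib power_int_minus power_int_inverse)
  also have "((C i j k) powi 2) powi a = C i j k powi (2 * a)" by (simp add: power_int_mult)
  finally show ?thesis unfolding P by (simp add: rr cvec_def mult_ac)
qed

lemma P_fwd:
  assumes g: "\<forall>l<n. g l \<noteq> 0" and \<alpha>: "in_ker_MT C n (\<lambda>r. of_int (\<alpha> r))"
  shows "(\<Prod>r\<in>rows C n. xg C g r powi \<alpha> r) = (\<Prod>r\<in>rows C n. cvec C r powi (2 * \<alpha> r))"
proof -
  have "(\<Prod>r\<in>rows C n. xg C g r powi \<alpha> r) = (\<Prod>r\<in>rows C n. cvec C r powi (2 * \<alpha> r)) * (\<Prod>r\<in>rows C n. \<Prod>l<n. g l powi (rootM r l * \<alpha> r))"
    using row_factor[OF g] by (simp add: prod.distrib)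
  also have "(\<Prod>r\<in>rows C n. \<Prod>l<n. g l powi (rootM r l * \<alpha> r)) = (\<Prod>l<n. \<Prod>r\<in>rows C n. g l powi (rootM r l * \<alpha> r))"
    by (rule prod.swap)
  also have "\<dots> = (\<Prod>l<n. g l powi (\<Sum>r\<in>rows C n. rootM r l * \<alpha> r))"
    using g finite_rows by (intro prod.cong refl) (simp add: prod_powi_sum)
  also have "\<dots> = 1"
  proof (intro prod.neutral ballI)
    fix l assume l: "l \<in> {..<n}"
    have "real_of_int (\<Sum>r\<in>rows C n. rootM r l * \<alpha> r) = 0"
      using \<alpha> l unfolding in_ker_MT_def rootMT_app_def by simp
    then show "g l powi (\<Sum>r\<in>rows C n. rootM r l * \<alpha> r) = 1" by (simp only: of_int_eq_0_iff) simp
  qed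
  finally show ?thesis by simp
qed

lemma ln_powi: "(x::real) > 0 \<Longrightarrow> ln (x powi a) = of_int a * ln x"
proof -
  assume x: "x > 0"
  have "x powi a = x powr real_of_int a" using powr_real_of_int'[of x a] x by simp
  then show ?thesis by (simp add: ln_powr)
qed

lemma cvec_ne: "r \<in> rows C n \<Longrightarrow> cvec C r \<noteq> 0"
  by (cases r) (auto simp: cvec_def rows_def)

lemma u_exists:
  assumes B: "int_basis_ker_MT C n k \<alpha>"
    and P: "\<forall>i<k. (\<Prod>r\<in>rows C n. X r powi \<alpha> i r) = (\<Prod>r\<in>rows C n. cvec C r powi (2 * \<alpha> i r))"
    and H: "\<forall>r\<in>rows C n. X r \<noteq> 0"
  shows "\<exists>u. \<forall>r\<in>rows C n. ln \<bar>X r\<bar> - ln ((cvec C r)^2) = (\<Sum>l<n. of_int (rootM r l) * u l)"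
proof -
  define w where "w = (\<lambda>r. ln \<bar>X r\<bar> - ln ((cvec C r)^2))"
  have lw: "(\<Sum>r\<in>rows C n. of_int (\<alpha> i r) * w r) = 0" if i: "i < k" for i
  proof -
    have "\<bar>\<Prod>r\<in>rows C n. X r powi \<alpha> i r\<bar> = \<bar>\<Prod>r\<in>rows C n. cvec C r powi (2 * \<alpha> i r)\<bar>"
      using P i by simp
    then have "(\<Prod>r\<in>rows C n. \<bar>X r\<bar> powi \<alpha> i r) = (\<Prod>r\<in>rows C n. \<bar>cvec C r\<bar> powi (2 * \<alpha> i r))"
      by (simp add: abs_prod power_int_abs)
    then have "ln (\<Prod>r\<in>rows C n. \<bar>X r\<bar> powi \<alpha> i r) = ln (\<Prod>r\<in>rows C n. \<bar>cvec C r\<bar> powi (2 * \<alpha> i r))"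
      by simp
    moreover have "ln (\<Prod>r\<in>rows C n. \<bar>X r\<bar> powi \<alpha> i r) = (\<Sum>r\<in>rows C n. of_int (\<alpha> i r) * ln \<bar>X r\<bar>)"
      using H finite_rows by (simp add: ln_prod ln_powi)
    moreover have "ln (\<Prod>r\<in>rows C n. \<bar>cvec C r\<bar> powi (2 * \<alpha> i r)) = (\<Sum>r\<in>rows C n. of_int (\<alpha> i r) * ln ((cvec C r)^2))"
    proof -
      have "ln (\<Prod>r\<in>rows C n. \<bar>cvec C r\<bar> powi (2 * \<alpha> i r)) = (\<Sum>r\<in>rows C n. of_int (2 * \<alpha> i r) * ln \<bar>cvec C r\<bar>)"
        using cvec_ne finite_rows by (simp add: ln_prod ln_powi)
      also have "\<dots> = (\<Sum>r\<in>rows C n. of_int (\<alpha> i r) * ln ((cvec C r)^2))"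
      proof (intro sum.cong refl)
        fix r assume "r \<in> rows C n"
        then have "\<bar>cvec C r\<bar> > 0" using cvec_ne by auto
        then have "ln ((cvec C r)^2) = 2 * ln \<bar>cvec C r\<bar>"
          by (metis ln_realpow of_nat_numeral power2_abs)
        then show "of_int (2 * \<alpha> i r) * ln \<bar>cvec C r\<bar> = of_int (\<alpha> i r) * ln ((cvec C r)^2)" by simp
      qed
      finally show ?thesis .
    qed
    ultimately show ?thesis unfolding w_def by (simp add: right_diff_distrib sum_subtractf)
  qed
  have "\<forall>y::row\<Rightarrow>real. (\<forall>l\<in>{..<n}. (\<Sum>r\<in>rows C n. of_int (rootM r l) * y r) = 0) \<longrightarrow> (\<Sum>r\<in>rows C n. w r * y r) = 0"
  proof (intro allI impI)
    fix y :: "row \<Rightarrow> real" assume "\<forall>l\<in>{..<n}. (\<Sum>r\<in>rows C n. of_int (rootM r l) * y r) = 0"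
    then have "in_ker_MT C n y" unfolding in_ker_MT_def rootMT_app_def by simp
    then obtain t where t: "\<forall>r\<in>rows C n. y r = (\<Sum>i<k. t i * of_int (\<alpha> i r))"
      using B unfolding int_basis_ker_MT_def by blast
    have "(\<Sum>r\<in>rows C n. w r * y r) = (\<Sum>r\<in>rows C n. \<Sum>i<k. t i * (of_int (\<alpha> i r) * w r))"
      using t by (simp add: sum_distrib_left sum_distrib_right mult_ac)
    also have "\<dots> = (\<Sum>i<k. t i * (\<Sum>r\<in>rows C n. of_int (\<alpha> i r) * w r))"
      by (subst sum.swap) (simp add: sum_distrib_left)
    also have "\<dots> = 0" using lw by simp
    finally show "(\<Sum>r\<in>rows C n. w r * y r) = 0" .
  qed
  from fredholm[where L="{..<n}" and A="\<lambda>l r. of_int (rootM r l)" and w=w, OF finite_rows _ this]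
  show ?thesis unfolding w_def by simp
qed

lemma deriv_diag:
  assumes lie: "lie_algebra C n"
    and KF: "\<forall>a b c. a < n \<longrightarrow> b < n \<longrightarrow> c < n \<longrightarrow> C a b c \<noteq> 0 \<longrightarrow> d c = d a + d b"
  shows "derivation C n (\<lambda>x c. if c < n then x c * d c else 0)"
  unfolding derivation_def
proof (intro conjI ballI allI)
  fix x :: "nat \<Rightarrow> real" assume "x \<in> vsp n"
  show "(\<lambda>c. if c < n then x c * d c else 0) \<in> vsp n" by (simp add: vsp_def)
next
  fix x y :: "nat \<Rightarrow> real" and t :: real
  show "(\<lambda>c. if c < n then (t * x c + y c) * d c else 0) = (\<lambda>i. t * (if i < n then x i * d i else 0) + (if i < n then y i * d i else 0))"
    by (simp add: fun_eq_iff algebra_simps)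
next
  fix x y :: "nat \<Rightarrow> real" assume "x \<in> vsp n" "y \<in> vsp n"
  show "(\<lambda>c. if c < n then brk C n x y c * d c else 0) =
        (\<lambda>i. brk C n (\<lambda>c. if c < n then x c * d c else 0) y i + brk C n x (\<lambda>c. if c < n then y c * d c else 0) i)"
  proof
    fix c
    show "(if c < n then brk C n x y c * d c else 0) =
        brk C n (\<lambda>c. if c < n then x c * d c else 0) y c + brk C n x (\<lambda>c. if c < n then y c * d c else 0) c"
    proof (cases "c < n")
      case False
      then show ?thesis by (simp add: brk_def lie_Z[OF lie])
    next
      case True
      have "brk C n (\<lambda>c. if c < n then x c * d c else 0) y c + brk C n x (\<lambda>c. if c < n then y c * d c else 0) c
          = (\<Sum>a<n. \<Sum>b<n. x a * y b * C a b c * (d a + d b))"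
        unfolding brk_def sum.distrib[symmetric]
        by (intro sum.cong refl) (simp add: algebra_simps)
      also have "\<dots> = (\<Sum>a<n. \<Sum>b<n. x a * y b * C a b c * d c)"
        using KF True by (intro sum.cong refl) (metis lessThan_iff mult_eq_0_iff)
      also have "\<dots> = brk C n x y c * d c" by (simp add: brk_def sum_distrib_right)
      finally show ?thesis using True by simp
    qed
  qed
qed

lemma bwd:
  assumes lie: "lie_algebra C n" and nice: "nice C n" and nil: "nilpotent C n"
    and b: "solves_MMT C n b" and dl: "\<forall>i<n. \<delta> i \<in> {0, 1}"
    and ky: "in_ker_MT C n y" and Xy: "\<forall>r\<in>rows C n. X r = -2 * lam * b r + y r"
    and H: "\<forall>r\<in>rows C n. X r \<noteq> 0"
    and L: "\<forall>r\<in>rows C n. logsign X r = (\<Sum>l<n. rootM r l * \<delta> l) mod 2"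
    and u: "\<forall>r\<in>rows C n. ln \<bar>X r\<bar> - ln ((cvec C r)^2) = (\<Sum>l<n. of_int (rootM r l) * u l)"
  shows "\<exists>g. diag_metric n g \<and> has_signature n g \<delta> \<and>
           (\<exists>D. derivation C n D \<and> (\<forall>x\<in>vsp n. Ric C n g x = (\<lambda>i. lam * x i + D x i)))"
proof -
  define s where "s = (\<lambda>l. if \<delta> l = 0 then 1 else (-1::real))"
  define g where "g = (\<lambda>l. s l * exp (u l))"
  have s2: "s l * s l = 1" for l by (simp add: s_def)
  have g': "\<forall>l<n. g l \<noteq> 0" by (simp add: g_def s_def)
  have diag: "diag_metric n g" using g' by (simp add: diag_metric_def)
  have sig: "has_signature n g \<delta>"
    unfolding has_signature_def
  proof (intro allI impI)
    fix i assume "i < n"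
    then have "\<delta> i = 0 \<or> \<delta> i = 1" using dl by auto
    then show "\<delta> i = (if g i > 0 then 0 else 1)" by (auto simp: g_def s_def)
  qed
  have xgX: "xg C g r = X r" if r: "r \<in> rows C n" for r
  proof -
    obtain i j k where rr: "r = (i,j,k)" by (cases r) auto
    have ijk: "i < n" "j < n" "k < n" "C i j k \<noteq> 0" using rowsD r rr by auto
    have "ln \<bar>X r\<bar> - ln ((C i j k)^2) = u k - u i - u j"
      using bspec[OF u r] rootM_sum[OF ijk(1-3), of u] by (simp add: rr cvec_def)
    then have "exp (ln \<bar>X r\<bar> - ln ((C i j k)^2)) = exp (u k) / (exp (u i) * exp (u j))"
      by (simp add: exp_diff)
    moreover have "exp (ln \<bar>X r\<bar> - ln ((C i j k)^2)) = \<bar>X r\<bar> / (C i j k)^2"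
      using H r ijk by (simp add: exp_diff)
    ultimately have absX: "\<bar>X r\<bar> = (C i j k)^2 * (exp (u k) / (exp (u i) * exp (u j)))"
      using ijk by (simp add: field_simps)
    have lg: "logsign X r = (\<delta> k - \<delta> i - \<delta> j) mod 2"
      using L r rootM_sum_int[OF ijk(1-3), of \<delta>] by (simp add: rr)
    have dd: "\<delta> i \<in> {0,1}" "\<delta> j \<in> {0,1}" "\<delta> k \<in> {0,1}" using dl ijk by auto
    have sgn: "X r = s k * s i * s j * \<bar>X r\<bar>"
      using lg dd H r unfolding logsign_def s_def
      by (auto split: if_splits)
    have "xg C g r = (C i j k)^2 * (s k * exp (u k)) / (s i * exp (u i) * (s j * exp (u j)))"
      by (simp add: rr xg_def g_def)
    also have "\<dots> = s k * s i * s j * ((C i j k)^2 * (exp (u k) / (exp (u i) * exp (u j))))"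
      by (simp add: s_def field_simps)
    also have "\<dots> = X r" using sgn absX by simp
    finally show ?thesis .
  qed
  define rho where "rho = rho0 C g n"
  have rhoX: "rho l = rootMT_app C n X l / 2" if "l < n" for l
  proof -
    have "rho l = (\<Sum>r\<in>rows C n. of_int (rootM r l) * xg C g r) / 2"
      unfolding rho_def by (rule rho_rows[OF lie nice nil g' that])
    also have "\<dots> = rootMT_app C n X l / 2"
      unfolding rootMT_app_def using xgX by simp
    finally show ?thesis .
  qed
  have MX: "rootMT_app C n X l = -2 * lam * rootMT_app C n b l" if "l < n" for l
  proof -
    have "rootMT_app C n X l = rootMT_app C n (\<lambda>r. y r + (-2 * lam) * b r) l"
      unfolding rootMT_app_def
    proof (intro sum.cong refl)
      fix r assume "r \<in> rows C n"
      then have hX: "X r = -2 * lam * b r + y r" using Xy by blast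
      show "of_int (rootM r l) * X r = of_int (rootM r l) * (y r + (-2 * lam) * b r)" unfolding hX by (simp add: algebra_simps)
    qed
    also have "\<dots> = -2 * lam * rootMT_app C n b l"
      unfolding rootMT_lin using ky that unfolding in_ker_MT_def by simp
    finally show ?thesis .
  qed
  have rel: "rho k - rho i - rho j = - lam" if r: "(i,j,k) \<in> rows C n" for i j k
  proof -
    have ijk: "i < n" "j < n" "k < n" using rowsD r by auto
    have "rho k - rho i - rho j = (\<Sum>l<n. of_int (rootM (i,j,k) l) * rho l)"
      using rootM_sum[OF ijk] by simp
    also have "\<dots> = (\<Sum>l<n. of_int (rootM (i,j,k) l) * rootMT_app C n b l) * (- lam)"
      unfolding sum_distrib_right by (intro sum.cong refl) (simp add: rhoX MX)
    also have "\<dots> = - lam" using b r unfolding solves_MMT_def by simp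
    finally show ?thesis .
  qed
  have KF: "\<forall>a b c. a < n \<longrightarrow> b < n \<longrightarrow> c < n \<longrightarrow> C a b c \<noteq> 0 \<longrightarrow> (rho c - lam) = (rho a - lam) + (rho b - lam)"
  proof (intro allI impI)
    fix a b c assume abc: "a < n" "b < n" "c < n" "C a b c \<noteq> 0"
    consider "a < b" | "b < a" | "a = b" by linarith
    then show "(rho c - lam) = (rho a - lam) + (rho b - lam)"
    proof cases
      case 1
      then have "(a,b,c) \<in> rows C n" using abc by (simp add: rows_def)
      from rel[OF this] show ?thesis by simp
    next
      case 2
      then have "(b,a,c) \<in> rows C n" using abc lie_AS[OF lie, of a b c] by (simp add: rows_def)
      from rel[OF this] show ?thesis by simp
    next
      case 3
      then show ?thesis using abc lie_AS[OF lie, of a a c] by simp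
    qed
  qed
  define D where "D = (\<lambda>x c. if c < n then x c * (rho c - lam) else 0)"
  have der: "derivation C n D" unfolding D_def by (rule deriv_diag[OF lie KF])
  have "\<forall>x\<in>vsp n. Ric C n g x = (\<lambda>i. lam * x i + D x i)"
  proof
    fix x assume x: "x \<in> vsp n"
    show "Ric C n g x = (\<lambda>i. lam * x i + D x i)"
      unfolding Ric_diag[OF lie nice nil g'] D_def rho_def[symmetric]
      using x by (auto simp: fun_eq_iff vsp_def algebra_simps)
  qed
  then show ?thesis using diag sig der by blast
qed

lemma xg_ne: "\<forall>l<n. g l \<noteq> 0 \<Longrightarrow> r \<in> rows C n \<Longrightarrow> xg C g r \<noteq> 0"
  by (cases r) (auto simp: xg_def rows_def)

theorem corollary1p6:
  fixes C :: sconst and n :: nat and b :: "row \<Rightarrow> real" and lam :: real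
    and \<delta> :: "nat \<Rightarrow> int"
  assumes "lie_algebra C n" and "nice C n" and "nilpotent C n"
    and "solves_MMT C n b"
    and "\<forall>i<n. \<delta> i \<in> {0, 1}"
  defines "A \<equiv> (\<exists>g. diag_metric n g \<and> has_signature n g \<delta> \<and>
              (\<exists>D. derivation C n D \<and> (\<forall>x\<in>vsp n. Ric C n g x = (\<lambda>i. lam * x i + D x i))))"
    and "KHL \<equiv> (\<lambda>X. (\<exists>y. in_ker_MT C n y \<and> (\<forall>r\<in>rows C n. X r = -2 * lam * b r + y r)) \<and>
              (\<forall>r\<in>rows C n. X r \<noteq> 0) \<and>
              (\<forall>r\<in>rows C n. logsign X r = (\<Sum>l<n. rootM r l * \<delta> l) mod 2))"
    and "P \<equiv> (\<lambda>X k \<alpha>. \<forall>i<k. (\<Prod>r\<in>rows C n. X r powi \<alpha> i r)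
                          = (\<Prod>r\<in>rows C n. cvec C r powi (2 * \<alpha> i r)))"
  shows "(A \<longleftrightarrow> (\<exists>X. KHL X \<and> (\<exists>k \<alpha>. int_basis_ker_MT C n k \<alpha> \<and> P X k \<alpha>)))
       \<and> (A \<longleftrightarrow> (\<exists>X. KHL X \<and> (\<forall>k \<alpha>. int_basis_ker_MT C n k \<alpha> \<longrightarrow> P X k \<alpha>)))"
proof -
  note lie = assms(1) and nice = assms(2) and nil = assms(3) and b = assms(4) and dl = assms(5)
  have fwdX: "\<exists>X. KHL X \<and> (\<forall>k \<alpha>. int_basis_ker_MT C n k \<alpha> \<longrightarrow> P X k \<alpha>)" if A
  proof -
    obtain g D where g: "diag_metric n g" "has_signature n g \<delta>" "derivation C n D"
      "\<forall>x\<in>vsp n. Ric C n g x = (\<lambda>i. lam * x i + D x i)"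
      using \<open>A\<close> unfolding A_def by blast
    have g': "\<forall>l<n. g l \<noteq> 0" using g(1) unfolding diag_metric_def by blast
    have rel: "\<forall>r\<in>rows C n. (\<Sum>l<n. of_int (rootM r l) * rootMT_app C n (xg C g) l) = -2 * lam"
    proof
      fix r assume r: "r \<in> rows C n"
      obtain i j k where rr: "r = (i,j,k)" by (cases r) auto
      have ijk: "i < n" "j < n" "k < n" using rowsD r rr by auto
      have rh: "rootMT_app C n (xg C g) l = 2 * rho0 C g n l" if "l < n" for l
        using rho_rows[OF lie nice nil g' that] unfolding rootMT_app_def by simp
      have "(\<Sum>l<n. of_int (rootM r l) * rootMT_app C n (xg C g) l) = (\<Sum>l<n. of_int (rootM r l) * (2 * rho0 C g n l))"
        by (intro sum.cong refl) (simp add: rh)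
      also have "\<dots> = 2 * (rho0 C g n k - rho0 C g n i - rho0 C g n j)"
        unfolding rr using rootM_sum[OF ijk, of "\<lambda>l. 2 * rho0 C g n l"] by simp
      also have "\<dots> = -2 * lam" using rel_fwd[OF lie nice nil g(1,3,4)] r rr by simp
      finally show "(\<Sum>l<n. of_int (rootM r l) * rootMT_app C n (xg C g) l) = -2 * lam" .
    qed
    have "KHL (xg C g)"
      unfolding KHL_def
      using K_from_rel[OF b rel] xg_ne[OF g'] sign_fwd[OF g(1,2)] by blast
    moreover have "\<forall>k \<alpha>. int_basis_ker_MT C n k \<alpha> \<longrightarrow> P (xg C g) k \<alpha>"
      unfolding P_def int_basis_ker_MT_def using P_fwd[OF g'] by blast
    ultimately show ?thesis by blast
  qed
  have bwdX: "A" if hK: "KHL X" and hB: "int_basis_ker_MT C n k \<alpha>" and hP: "P X k \<alpha>" for X k \<alpha>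
  proof -
    obtain y where y: "in_ker_MT C n y" "\<forall>r\<in>rows C n. X r = -2 * lam * b r + y r"
      and H: "\<forall>r\<in>rows C n. X r \<noteq> 0" and L: "\<forall>r\<in>rows C n. logsign X r = (\<Sum>l<n. rootM r l * \<delta> l) mod 2"
      using hK unfolding KHL_def by blast
    obtain u where u: "\<forall>r\<in>rows C n. ln \<bar>X r\<bar> - ln ((cvec C r)^2) = (\<Sum>l<n. of_int (rootM r l) * u l)"
      using u_exists[OF hB _ H] hP unfolding P_def by blast
    show ?thesis unfolding A_def by (rule bwd[OF lie nice nil b dl y H L u])
  qed
  obtain k0 \<alpha>0 where B0: "int_basis_ker_MT C n k0 \<alpha>0" using exists_int_basis by blast
  show ?thesis
  proof (intro conjI iffI)
    assume A
    then obtain X where "KHL X" "\<forall>k \<alpha>. int_basis_ker_MT C n k \<alpha> \<longrightarrow> P X k \<alpha>" using fwdX by blast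
    then show "\<exists>X. KHL X \<and> (\<exists>k \<alpha>. int_basis_ker_MT C n k \<alpha> \<and> P X k \<alpha>)" using B0 by blast
  next
    assume "\<exists>X. KHL X \<and> (\<exists>k \<alpha>. int_basis_ker_MT C n k \<alpha> \<and> P X k \<alpha>)"
    then show A using bwdX by blast
  next
    assume A
    then show "\<exists>X. KHL X \<and> (\<forall>k \<alpha>. int_basis_ker_MT C n k \<alpha> \<longrightarrow> P X k \<alpha>)" using fwdX by blast
  next
    assume "\<exists>X. KHL X \<and> (\<forall>k \<alpha>. int_basis_ker_MT C n k \<alpha> \<longrightarrow> P X k \<alpha>)"
    then show A using bwdX B0 by blast
  qed
qed

end
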